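(* Let $\mathcal{A}$ be a unital algebra, $\tau:\mathcal{A}\to\mathbb{C}$ a unital linear functional and $\tau':\mathcal{A}\to\mathbb{C}$ a linear functional with $\tau'(1)=0$, and let $\mathcal{A}_1,\mathcal{A}_2$ be two unital subalgebras which are infinitesimally free with respect to $(\tau,\tau')$. Let $\mathcal{I}$ be an ideal of $\mathcal{A}$ with $\mathcal{I}\subset \ker(\tau)$. Then $(\mathcal{A}_1,\mathcal{I}\cap \mathcal{A}_1)$ and $(\mathcal{A}_2,\mathcal{I}\cap \mathcal{A}_2)$ are free of type $B$ in $(\mathcal{A},\tau,\mathcal{I},\tau'|_{\mathcal{I}})$.
   Context: Infinitesimal freeness w.r.t. $(\tau,\tau')$: whenever $a_j\in\mathcal{A}_{i_j}$ with consecutive indices different and $\tau(a_j)=0$ for all $j$, $\tau(a_1\cdots a_n)=0$ and $\tau'(a_1\cdots a_n)=\sum_{j=1}^n\tau(a_1\cdots a_{j-1}\tau'(a_j)a_{j+1}\cdots a_n)$. Freeness of type $B$ in $(\mathcal{A},\tau,\mathcal{I},\phi)$ with $\phi:\mathcal{I}\to\mathbb{C}$ linear, for pairs $(\mathcal{A}_h,V_h)$ with $V_h\subset\mathcal{I}$ a subspace stable under two-sided multiplication by $\mathcal{A}_h$: $\mathcal{A}_1,\mathcal{A}_2$ are free w.r.t. $\tau$, and whenever $a_n\in\mathcal{A}_{i_n},\dots,a_1\in\mathcal{A}_{i_1}$, $v\in V_h$, $b_1\in\mathcal{A}_{j_1},\dots,b_m\in\mathcal{A}_{j_m}$ with any two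 consecutive indices in $i_n,\dots,i_1,h,j_1,\dots,j_m$ different and all $a_r,b_s$ centered for $\tau$, $\phi(a_n\cdots a_1vb_1\cdots b_m)=\tau(a_nb_m)\cdots\tau(a_1b_1)\phi(v)$ if $n=m$ and $i_r=j_r$ for all $r$, and $=0$ otherwise. *)

theory Defs
  imports Complex_Main
begin

definition complex_unital_algebra :: "(complex \<Rightarrow> 'a::ring_1 \<Rightarrow> 'a) \<Rightarrow> bool" where
  "complex_unital_algebra sc \<longleftrightarrow> module sc \<and>
     (\<forall>c x y. sc c (x * y) = sc c x * y \<and> sc c (x * y) = x * sc c y)"

definition lin_functional :: "(complex \<Rightarrow> 'a::ring_1 \<Rightarrow> 'a) \<Rightarrow> ('a \<Rightarrow> complex) \<Rightarrow> bool" where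
  "lin_functional sc f \<longleftrightarrow> (\<forall>x y. f (x + y) = f x + f y) \<and> (\<forall>c x. f (sc c x) = c * f x)"

definition subspace_of :: "(complex \<Rightarrow> 'a::ring_1 \<Rightarrow> 'a) \<Rightarrow> 'a set \<Rightarrow> bool" where
  "subspace_of sc V \<longleftrightarrow> 0 \<in> V \<and> (\<forall>x\<in>V. \<forall>y\<in>V. x + y \<in> V) \<and> (\<forall>c. \<forall>x\<in>V. sc c x \<in> V)"

definition unital_subalgebra :: "(complex \<Rightarrow> 'a::ring_1 \<Rightarrow> 'a) \<Rightarrow> 'a set \<Rightarrow> bool" where
  "unital_subalgebra sc B \<longleftrightarrow> subspace_of sc B \<and> 1 \<in> B \<and> (\<forall>x\<in>B. \<forall>y\<in>B. x * y \<in> B)"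

definition alg_ideal :: "(complex \<Rightarrow> 'a::ring_1 \<Rightarrow> 'a) \<Rightarrow> 'a set \<Rightarrow> bool" where
  "alg_ideal sc I \<longleftrightarrow> subspace_of sc I \<and> (\<forall>x\<in>I. \<forall>y. x * y \<in> I \<and> y * x \<in> I)"

definition fam2 :: "'a set \<Rightarrow> 'a set \<Rightarrow> nat \<Rightarrow> 'a set" where
  "fam2 A1 A2 k = (if k = 1 then A1 else A2)"

text \<open>Admissible word of length n: a r (r < n) stands for a_{r+1}, lying in the
subalgebra with index i r in {1,2}, consecutive indices different, all centered.\<close>
definition alt_centered ::
  "('a::ring_1 \<Rightarrow> complex) \<Rightarrow> (nat \<Rightarrow> 'a set) \<Rightarrow> nat \<Rightarrow> (nat \<Rightarrow> nat) \<Rightarrow> (nat \<Rightarrow> 'a) \<Rightarrow> bool" where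
  "alt_centered \<tau> Alg n i a \<longleftrightarrow>
     (\<forall>r<n. i r \<in> {1,2} \<and> a r \<in> Alg (i r) \<and> \<tau> (a r) = 0) \<and>
     (\<forall>r. Suc r < n \<longrightarrow> i r \<noteq> i (Suc r))"

definition free_wrt ::
  "('a::ring_1 \<Rightarrow> complex) \<Rightarrow> 'a set \<Rightarrow> 'a set \<Rightarrow> bool" where
  "free_wrt \<tau> A1 A2 \<longleftrightarrow>
     (\<forall>n i a. n \<ge> 1 \<longrightarrow> alt_centered \<tau> (fam2 A1 A2) n i a \<longrightarrow>
        \<tau> (prod_list (map a [0..<n])) = 0)"

definition inf_free_wrt ::
  "(complex \<Rightarrow> 'a::ring_1 \<Rightarrow> 'a) \<Rightarrow> ('a \<Rightarrow> complex) \<Rightarrow> ('a \<Rightarrow> complex) \<Rightarrow> 'a set \<Rightarrow> 'a set \<Rightarrow> bool" where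
  "inf_free_wrt sc \<tau> \<tau>' A1 A2 \<longleftrightarrow>
     (\<forall>n i a. n \<ge> 1 \<longrightarrow> alt_centered \<tau> (fam2 A1 A2) n i a \<longrightarrow>
        \<tau> (prod_list (map a [0..<n])) = 0 \<and>
        \<tau>' (prod_list (map a [0..<n])) =
          (\<Sum>j<n. \<tau> (prod_list (map (\<lambda>k. if k = j then sc (\<tau>' (a j)) 1 else a k) [0..<n]))))"

text \<open>Freeness of type B of the pairs (A1,V1), (A2,V2) in (A, tau, I, phi).
Here phi is only ever evaluated on elements of I.\<close>
definition free_type_B ::
  "(complex \<Rightarrow> 'a::ring_1 \<Rightarrow> 'a) \<Rightarrow> ('a \<Rightarrow> complex) \<Rightarrow> 'a set \<Rightarrow> ('a \<Rightarrow> complex) \<Rightarrow>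
   'a set \<Rightarrow> 'a set \<Rightarrow> 'a set \<Rightarrow> 'a set \<Rightarrow> bool" where
  "free_type_B sc \<tau> I \<phi> A1 V1 A2 V2 \<longleftrightarrow>
     (\<forall>h\<in>{1,2}. subspace_of sc (fam2 V1 V2 h) \<and> fam2 V1 V2 h \<subseteq> I \<and>
        (\<forall>x\<in>fam2 A1 A2 h. \<forall>v\<in>fam2 V1 V2 h. x * v \<in> fam2 V1 V2 h \<and> v * x \<in> fam2 V1 V2 h)) \<and>
     free_wrt \<tau> A1 A2 \<and>
     (\<forall>h\<in>{1::nat,2}. \<forall>v\<in>fam2 V1 V2 h. \<forall>n m i a j b.
        alt_centered \<tau> (fam2 A1 A2) n i a \<longrightarrow> alt_centered \<tau> (fam2 A1 A2) m j b \<longrightarrow>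
        (n > 0 \<longrightarrow> i 0 \<noteq> h) \<longrightarrow> (m > 0 \<longrightarrow> j 0 \<noteq> h) \<longrightarrow>
        \<phi> (prod_list (map a (rev [0..<n])) * v * prod_list (map b [0..<m])) =
          (if n = m \<and> (\<forall>r<n. i r = j r)
           then (\<Prod>r<n. \<tau> (a r * b r)) * \<phi> v else 0))"

end

theory Submission
  imports Defs
begin

lemma pl_Suc: "prod_list (map f [0..<Suc N]) = f 0 * prod_list (map (\<lambda>k. f (Suc k)) [0..<N])"
  by (simp add: upt_conv_Cons map_Suc_upt[symmetric] o_def del: upt_Suc)

lemma pl_rev_Suc: "prod_list (map a (rev [0..<Suc n])) = prod_list (map (\<lambda>k. a (Suc k)) (rev [0..<n])) * a 0"
  by (simp add: upt_conv_Cons map_Suc_upt[symmetric] o_def rev_map del: upt_Suc)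

definition mid3 :: "(nat \<Rightarrow> 'b) \<Rightarrow> nat \<Rightarrow> 'b \<Rightarrow> (nat \<Rightarrow> 'b) \<Rightarrow> nat \<Rightarrow> 'b" where
  "mid3 a n v b k = (if k < n then a (n - 1 - k) else if k = n then v else b (k - n - 1))"

definition cat2 :: "(nat \<Rightarrow> 'b) \<Rightarrow> nat \<Rightarrow> (nat \<Rightarrow> 'b) \<Rightarrow> nat \<Rightarrow> 'b" where
  "cat2 a n b k = (if k < n then a (n - 1 - k) else b (k - n))"

lemma concat3:
  "prod_list (map a (rev [0..<n])) * v * prod_list (map b [0..<m])
   = prod_list (map (mid3 a n v b) [0..<n + 1 + m])"
proof (induction n)
  case 0
  have "prod_list (map (mid3 a 0 v b) [0..<Suc m]) = v * prod_list (map b [0..<m])"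
    unfolding pl_Suc by (simp add: mid3_def)
  then show ?case by simp
next
  case (Suc n)
  have e: "(\<lambda>k. mid3 a (Suc n) v b (Suc k)) = mid3 a n v b"
    by (auto simp: mid3_def fun_eq_iff)
  have "prod_list (map a (rev [0..<Suc n])) * v * prod_list (map b [0..<m])
      = a n * (prod_list (map a (rev [0..<n])) * v * prod_list (map b [0..<m]))"
    by (simp add: mult.assoc)
  also have "\<dots> = a n * prod_list (map (mid3 a n v b) [0..<n + 1 + m])" using Suc by simp
  also have "\<dots> = prod_list (map (mid3 a (Suc n) v b) [0..<Suc (n + 1 + m)])"
    unfolding pl_Suc e by (simp add: mid3_def)
  finally show ?case by simp
qed

lemma concat2:
  "prod_list (map a (rev [0..<n])) * prod_list (map b [0..<m])
   = prod_list (map (cat2 a n b) [0..<n + m])"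
proof (induction n)
  case 0
  then show ?case by (simp add: cat2_def)
next
  case (Suc n)
  have e: "(\<lambda>k. cat2 a (Suc n) b (Suc k)) = cat2 a n b"
    by (auto simp: cat2_def fun_eq_iff)
  have "prod_list (map a (rev [0..<Suc n])) * prod_list (map b [0..<m])
      = a n * (prod_list (map a (rev [0..<n])) * prod_list (map b [0..<m]))"
    by (simp add: mult.assoc)
  also have "\<dots> = a n * prod_list (map (cat2 a n b) [0..<n + m])" using Suc by simp
  also have "\<dots> = prod_list (map (cat2 a (Suc n) b) [0..<Suc (n + m)])"
    unfolding pl_Suc e by (simp add: cat2_def)
  finally show ?case by simp
qed

lemma alt3:
  assumes "alt_centered \<tau> F n i a" "alt_centered \<tau> F m j b"
    and "h \<in> {1,2}" "v \<in> F h" "\<tau> v = 0"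
    and "n > 0 \<longrightarrow> i 0 \<noteq> h" "m > 0 \<longrightarrow> j 0 \<noteq> h"
  shows "alt_centered \<tau> F (n + 1 + m) (mid3 i n h j) (mid3 a n v b)"
  unfolding alt_centered_def
proof (rule conjI[OF allI[OF impI] allI[OF impI]])
  fix r assume r: "r < n + 1 + m"
  show "mid3 i n h j r \<in> {1, 2} \<and> mid3 a n v b r \<in> F (mid3 i n h j r) \<and> \<tau> (mid3 a n v b r) = 0"
  proof (cases "r < n")
    case True
    then show ?thesis using assms(1) unfolding alt_centered_def mid3_def by auto
  next
    case False
    show ?thesis
    proof (cases "r = n")
      case True then show ?thesis using assms unfolding mid3_def by auto
    next
      case False
      with \<open>\<not> r < n\<close> r have "r - n - 1 < m" by auto
      then show ?thesis using assms(2) False \<open>\<not> r < n\<close> unfolding alt_centered_def mid3_def by auto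
    qed
  qed
next
  fix r assume r: "Suc r < n + 1 + m"
  consider "Suc r < n" | "Suc r = n" | "r = n" | "r > n" by linarith
  then show "mid3 i n h j r \<noteq> mid3 i n h j (Suc r)"
  proof cases
    case 1
    then have "i (n - 1 - Suc r) \<noteq> i (Suc (n - 1 - Suc r))"
      using assms(1) unfolding alt_centered_def by auto
    moreover have "Suc (n - 1 - Suc r) = n - 1 - r" using 1 by auto
    ultimately show ?thesis using 1 unfolding mid3_def by auto
  next
    case 2 then show ?thesis using assms(6) unfolding mid3_def by auto
  next
    case 3 then show ?thesis using assms(7) r unfolding mid3_def by auto
  next
    case 4
    then have "j (r - n - 1) \<noteq> j (Suc (r - n - 1))"
      using assms(2) r unfolding alt_centered_def by auto
    moreover have "Suc (r - n - 1) = Suc r - n - 1" using 4 by auto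
    ultimately show ?thesis using 4 unfolding mid3_def by auto
  qed
qed

lemma alt2:
  assumes "alt_centered \<tau> F n i a" "alt_centered \<tau> F m j b"
    and "n > 0 \<and> m > 0 \<longrightarrow> i 0 \<noteq> j 0"
  shows "alt_centered \<tau> F (n + m) (cat2 i n j) (cat2 a n b)"
  unfolding alt_centered_def
proof (rule conjI[OF allI[OF impI] allI[OF impI]])
  fix r assume r: "r < n + m"
  show "cat2 i n j r \<in> {1, 2} \<and> cat2 a n b r \<in> F (cat2 i n j r) \<and> \<tau> (cat2 a n b r) = 0"
  proof (cases "r < n")
    case True
    then show ?thesis using assms(1) unfolding alt_centered_def cat2_def by auto
  next
    case False
    with r have "r - n < m" by auto
    then show ?thesis using assms(2) False unfolding alt_centered_def cat2_def by auto
  qed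
next
  fix r assume r: "Suc r < n + m"
  consider "Suc r < n" | "Suc r = n" | "r \<ge> n" by linarith
  then show "cat2 i n j r \<noteq> cat2 i n j (Suc r)"
  proof cases
    case 1
    then have "i (n - 1 - Suc r) \<noteq> i (Suc (n - 1 - Suc r))"
      using assms(1) unfolding alt_centered_def by auto
    moreover have "Suc (n - 1 - Suc r) = n - 1 - r" using 1 by auto
    ultimately show ?thesis using 1 unfolding cat2_def by auto
  next
    case 2 then show ?thesis using assms(3) r unfolding cat2_def by auto
  next
    case 3
    then have "j (r - n) \<noteq> j (Suc (r - n))"
      using assms(2) r unfolding alt_centered_def by auto
    moreover have "Suc (r - n) = Suc r - n" using 3 by auto
    ultimately show ?thesis using 3 unfolding cat2_def by auto
  qed
qed

lemma alt_shift:
  assumes "alt_centered \<tau> F (Suc n) i a"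
  shows "alt_centered \<tau> F n (\<lambda>k. i (Suc k)) (\<lambda>k. a (Suc k))"
  using assms unfolding alt_centered_def by auto

lemma prod_in_ideal:
  assumes "\<forall>x\<in>I. \<forall>y. x * y \<in> I \<and> y * x \<in> I" "x \<in> set xs" "f x \<in> I"
  shows "prod_list (map f xs) \<in> I"
  using assms(2) by (induction xs) (use assms in auto)


lemma if_swap_mult: "(c::complex) * (if P then x else 0) = (if P then x * c else 0)"
  by simp

context
  fixes sc :: "complex \<Rightarrow> 'a::ring_1 \<Rightarrow> 'a" and \<tau> :: "'a \<Rightarrow> complex" and A1 A2 :: "'a set"
  assumes alg: "complex_unital_algebra sc"
    and lin: "lin_functional sc \<tau>" and t1: "\<tau> 1 = 1"
    and s1: "unital_subalgebra sc A1" and s2: "unital_subalgebra sc A2"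
    and fr: "free_wrt \<tau> A1 A2"
begin

lemma md: "module sc" using alg unfolding complex_unital_algebra_def by auto

lemma sc_mult: "sc c (x * y) = sc c x * y" "sc c (x * y) = x * sc c y"
  using alg unfolding complex_unital_algebra_def by blast+

lemma tau_add: "\<tau> (x + y) = \<tau> x + \<tau> y" and tau_sc: "\<tau> (sc c x) = c * \<tau> x"
  using lin unfolding lin_functional_def by auto

lemma subF: "h \<in> {1,2} \<Longrightarrow> unital_subalgebra sc (fam2 A1 A2 h)"
  using s1 s2 unfolding fam2_def by auto

lemma free_app: "n \<ge> 1 \<Longrightarrow> alt_centered \<tau> (fam2 A1 A2) n i a \<Longrightarrow> \<tau> (prod_list (map a [0..<n])) = 0"
  using fr unfolding free_wrt_def by blast

lemma nonmatch:
  assumes "alt_centered \<tau> (fam2 A1 A2) n i a" "alt_centered \<tau> (fam2 A1 A2) m j b"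
    and "\<not> (n > 0 \<and> m > 0 \<and> i 0 = j 0)"
  shows "\<tau> (prod_list (map a (rev [0..<n])) * prod_list (map b [0..<m]))
    = (if n = m \<and> (\<forall>r<n. i r = j r) then \<Prod>r<n. \<tau> (a r * b r) else 0)"
proof (cases "n + m = 0")
  case True then show ?thesis using t1 by simp
next
  case False
  have "\<tau> (prod_list (map a (rev [0..<n])) * prod_list (map b [0..<m])) = 0"
    unfolding concat2 using False alt2[OF assms(1,2)] assms(3) by (intro free_app) auto
  moreover have "(n = m \<and> (\<forall>r<n. i r = j r)) = False" using False assms(3) by auto
  ultimately show ?thesis by (simp only: if_False)
qed

lemma freeL:
  "alt_centered \<tau> (fam2 A1 A2) n i a \<Longrightarrow> alt_centered \<tau> (fam2 A1 A2) m j b \<Longrightarrow>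
   \<tau> (prod_list (map a (rev [0..<n])) * prod_list (map b [0..<m]))
    = (if n = m \<and> (\<forall>r<n. i r = j r) then \<Prod>r<n. \<tau> (a r * b r) else 0)"
proof (induction n arbitrary: m i a j b)
  case 0
  then show ?case using nonmatch by blast
next
  case (Suc n)
  show ?case
  proof (cases "m > 0 \<and> i 0 = j 0")
    case False
    then show ?thesis using nonmatch[OF Suc.prems] by blast
  next
    case True
    then obtain m' where m': "m = Suc m'" by (cases m) auto
    have ij: "i 0 = j 0" using True by simp
    let ?F = "fam2 A1 A2"
    let ?A = "prod_list (map (\<lambda>k. a (Suc k)) (rev [0..<n]))"
    let ?B = "prod_list (map (\<lambda>k. b (Suc k)) [0..<m'])"
    define t where "t = \<tau> (a 0 * b 0)"
    define c where "c = a 0 * b 0 + sc (- t) 1"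
    have h: "i 0 \<in> {1,2}" "a 0 \<in> ?F (i 0)" "b 0 \<in> ?F (i 0)"
      using Suc.prems m' ij unfolding alt_centered_def by auto
    have U: "unital_subalgebra sc (?F (i 0))" using subF h(1) by blast
    have cF: "c \<in> ?F (i 0)"
      using U h unfolding c_def unital_subalgebra_def subspace_of_def by auto
    have ct: "\<tau> c = 0" unfolding c_def t_def using t1 by (simp add: tau_add tau_sc)
    have ab: "a 0 * b 0 = c + sc t 1"
      unfolding c_def using module.scale_left_distrib[OF md, of "-t" t 1]
      by (simp add: module.scale_zero_left[OF md] add.assoc)
    have altA: "alt_centered \<tau> ?F n (\<lambda>k. i (Suc k)) (\<lambda>k. a (Suc k))"
      using alt_shift Suc.prems(1) by blast
    have altB: "alt_centered \<tau> ?F m' (\<lambda>k. j (Suc k)) (\<lambda>k. b (Suc k))"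
      using alt_shift Suc.prems(2) m' by blast
    have ai: "n > 0 \<longrightarrow> i (Suc 0) \<noteq> i 0"
      using Suc.prems(1) unfolding alt_centered_def by auto
    have bj: "m' > 0 \<longrightarrow> j (Suc 0) \<noteq> i 0"
      using Suc.prems(2) m' ij unfolding alt_centered_def by auto
    have z: "\<tau> (?A * c * ?B) = 0"
      unfolding concat3
      by (rule free_app[OF _ alt3[OF altA altB h(1) cF ct]]) (use ai bj in auto)
    have "?A * sc t 1 * ?B = sc t (?A * ?B)"
      by (metis sc_mult mult_1_right)
    then have "\<tau> (?A * sc t 1 * ?B) = t * \<tau> (?A * ?B)" by (simp add: tau_sc)
    also have "\<dots> = t * (if n = m' \<and> (\<forall>r<n. i (Suc r) = j (Suc r))
          then \<Prod>r<n. \<tau> (a (Suc r) * b (Suc r)) else 0)"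
      using Suc.IH[OF altA altB] by simp
    finally have w: "\<tau> (?A * sc t 1 * ?B) = \<dots>" .
    have "prod_list (map a (rev [0..<Suc n])) * prod_list (map b [0..<m])
        = ?A * (a 0 * b 0) * ?B"
      unfolding pl_rev_Suc m' pl_Suc by (simp add: mult.assoc)
    also have "\<dots> = ?A * c * ?B + ?A * sc t 1 * ?B"
      unfolding ab by (simp add: algebra_simps)
    finally have "\<tau> (prod_list (map a (rev [0..<Suc n])) * prod_list (map b [0..<m]))
       = t * (if n = m' \<and> (\<forall>r<n. i (Suc r) = j (Suc r))
          then \<Prod>r<n. \<tau> (a (Suc r) * b (Suc r)) else 0)"
      using z w by (simp add: tau_add)
    moreover have "(\<forall>r<Suc n. i r = j r) = (\<forall>r<n. i (Suc r) = j (Suc r))"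
      using ij by (auto simp: less_Suc_eq_0_disj)
    moreover have "(if Suc n = m \<and> (\<forall>r<Suc n. i r = j r) then \<Prod>r<Suc n. \<tau> (a r * b r) else 0)
       = t * (if n = m' \<and> (\<forall>r<n. i (Suc r) = j (Suc r))
          then \<Prod>r<n. \<tau> (a (Suc r) * b (Suc r)) else 0)"
    proof (cases "n = m' \<and> (\<forall>r<n. i (Suc r) = j (Suc r))")
      case True
      then show ?thesis using ij unfolding m'
        by (simp only: prod.lessThan_Suc_shift t_def if_True) (auto simp: less_Suc_eq_0_disj)
    next
      case False
      then show ?thesis using ij unfolding m' by (auto simp: less_Suc_eq_0_disj)
    qed
    ultimately show ?thesis by simp
  qed
qed

end


theorem proposition2p8:
  fixes sc :: "complex \<Rightarrow> 'a::ring_1 \<Rightarrow> 'a"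
    and \<tau> \<tau>' :: "'a \<Rightarrow> complex"
    and A1 A2 I :: "'a set"
  assumes "complex_unital_algebra sc"
    and "lin_functional sc \<tau>" and "\<tau> 1 = 1"
    and "lin_functional sc \<tau>'" and "\<tau>' 1 = 0"
    and "unital_subalgebra sc A1" and "unital_subalgebra sc A2"
    and "inf_free_wrt sc \<tau> \<tau>' A1 A2"
    and "alg_ideal sc I" and "\<forall>x\<in>I. \<tau> x = 0"
  shows "free_type_B sc \<tau> I \<tau>' A1 (I \<inter> A1) A2 (I \<inter> A2)"
proof -
  note alg = assms(1) and lin = assms(2) and t1 = assms(3)
  note s1 = assms(6) and s2 = assms(7)
  have fr: "free_wrt \<tau> A1 A2" using assms(8) unfolding inf_free_wrt_def free_wrt_def by blast
  have idl: "\<forall>x\<in>I. \<forall>y. x * y \<in> I \<and> y * x \<in> I" and sI: "subspace_of sc I"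
    using assms(9) unfolding alg_ideal_def by auto
  have famI: "fam2 (I \<inter> A1) (I \<inter> A2) h = I \<inter> fam2 A1 A2 h" for h
    unfolding fam2_def by auto
  have P1: "\<forall>h\<in>{1,2}. subspace_of sc (fam2 (I \<inter> A1) (I \<inter> A2) h) \<and> fam2 (I \<inter> A1) (I \<inter> A2) h \<subseteq> I \<and>
        (\<forall>x\<in>fam2 A1 A2 h. \<forall>v\<in>fam2 (I \<inter> A1) (I \<inter> A2) h.
           x * v \<in> fam2 (I \<inter> A1) (I \<inter> A2) h \<and> v * x \<in> fam2 (I \<inter> A1) (I \<inter> A2) h)"
  proof
    fix h :: nat assume h: "h \<in> {1,2}"
    have U: "unital_subalgebra sc (fam2 A1 A2 h)" using subF[OF alg lin t1 s1 s2 fr h] .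
    show "subspace_of sc (fam2 (I \<inter> A1) (I \<inter> A2) h) \<and> fam2 (I \<inter> A1) (I \<inter> A2) h \<subseteq> I \<and>
        (\<forall>x\<in>fam2 A1 A2 h. \<forall>v\<in>fam2 (I \<inter> A1) (I \<inter> A2) h.
           x * v \<in> fam2 (I \<inter> A1) (I \<inter> A2) h \<and> v * x \<in> fam2 (I \<inter> A1) (I \<inter> A2) h)"
      unfolding famI using U sI idl unfolding unital_subalgebra_def subspace_of_def by auto
  qed
  have P3: "\<forall>h\<in>{1::nat,2}. \<forall>v\<in>fam2 (I \<inter> A1) (I \<inter> A2) h. \<forall>n m i a j b.
        alt_centered \<tau> (fam2 A1 A2) n i a \<longrightarrow> alt_centered \<tau> (fam2 A1 A2) m j b \<longrightarrow>
        (n > 0 \<longrightarrow> i 0 \<noteq> h) \<longrightarrow> (m > 0 \<longrightarrow> j 0 \<noteq> h) \<longrightarrow>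
        \<tau>' (prod_list (map a (rev [0..<n])) * v * prod_list (map b [0..<m])) =
          (if n = m \<and> (\<forall>r<n. i r = j r)
           then (\<Prod>r<n. \<tau> (a r * b r)) * \<tau>' v else 0)"
  proof (intro ballI allI impI)
    fix h :: nat and v n m i a j b
    assume h: "h \<in> {1,2}" and v: "v \<in> fam2 (I \<inter> A1) (I \<inter> A2) h"
      and al: "alt_centered \<tau> (fam2 A1 A2) n i a" and bl: "alt_centered \<tau> (fam2 A1 A2) m j b"
      and i0: "n > 0 \<longrightarrow> i 0 \<noteq> h" and j0: "m > 0 \<longrightarrow> j 0 \<noteq> h"
    have vI: "v \<in> I" and vF: "v \<in> fam2 A1 A2 h" using v unfolding famI by auto
    have tv: "\<tau> v = 0" using vI assms(10) by auto
    define N where "N = n + 1 + m"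
    define d where "d = mid3 a n v b"
    have alt: "alt_centered \<tau> (fam2 A1 A2) N (mid3 i n h j) d"
      unfolding N_def d_def by (rule alt3[OF al bl h vF tv i0 j0])
    have "\<tau>' (prod_list (map d [0..<N])) =
        (\<Sum>k<N. \<tau> (prod_list (map (\<lambda>l. if l = k then sc (\<tau>' (d k)) 1 else d l) [0..<N])))"
    proof -
      have "N \<ge> 1" unfolding N_def by simp
      then show ?thesis using assms(8) alt unfolding inf_free_wrt_def by blast
    qed
    also have "\<dots> = \<tau> (prod_list (map (\<lambda>l. if l = n then sc (\<tau>' (d n)) 1 else d l) [0..<N]))"
    proof -
      have z: "\<tau> (prod_list (map (\<lambda>l. if l = k then sc (\<tau>' (d k)) 1 else d l) [0..<N])) = 0"
        if "k \<in> {..<N} - {n}" for k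
      proof -
        have "prod_list (map (\<lambda>l. if l = k then sc (\<tau>' (d k)) 1 else d l) [0..<N]) \<in> I"
          by (rule prod_in_ideal[OF idl, of n]) (use that vI in \<open>auto simp: N_def d_def mid3_def\<close>)
        then show ?thesis using assms(10) by auto
      qed
      have "n \<in> {..<N}" unfolding N_def by auto
      then show ?thesis
        by (subst sum.remove[of _ n]) (auto simp: sum.neutral z)
    qed
    also have "map (\<lambda>l. if l = n then sc (\<tau>' (d n)) 1 else d l) [0..<N]
        = map (mid3 a n (sc (\<tau>' v) 1) b) [0..<N]"
      by (auto simp: d_def mid3_def)
    also have "prod_list (map (mid3 a n (sc (\<tau>' v) 1) b) [0..<N])
        = prod_list (map a (rev [0..<n])) * sc (\<tau>' v) 1 * prod_list (map b [0..<m])"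
      unfolding N_def concat3 ..
    also have "\<dots> = sc (\<tau>' v) (prod_list (map a (rev [0..<n])) * prod_list (map b [0..<m]))"
      by (metis sc_mult[OF alg lin t1 s1 s2 fr] mult_1_right)
    also have "\<tau> \<dots> = \<tau>' v * \<tau> (prod_list (map a (rev [0..<n])) * prod_list (map b [0..<m]))"
      by (rule tau_sc[OF alg lin t1 s1 s2 fr])
    also have "\<dots> = \<tau>' v * (if n = m \<and> (\<forall>r<n. i r = j r) then \<Prod>r<n. \<tau> (a r * b r) else 0)"
      using freeL[OF alg lin t1 s1 s2 fr al bl] by simp
    finally have F: "\<tau>' (prod_list (map d [0..<N])) = \<tau>' v * (if n = m \<and> (\<forall>r<n. i r = j r) then \<Prod>r<n. \<tau> (a r * b r) else 0)" .
    have E: "prod_list (map a (rev [0..<n])) * v * prod_list (map b [0..<m]) = prod_list (map d [0..<N])"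
      unfolding d_def N_def by (rule concat3)
    show "\<tau>' (prod_list (map a (rev [0..<n])) * v * prod_list (map b [0..<m])) =
          (if n = m \<and> (\<forall>r<n. i r = j r)
           then (\<Prod>r<n. \<tau> (a r * b r)) * \<tau>' v else 0)"
      unfolding E F by (rule if_swap_mult)
  qed
  show ?thesis unfolding free_type_B_def using P1 fr P3 by blast
qed

end
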